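(* Let $\pi\in S_n$. The set of source cells of $\beta_\pi$ is exactly $\{B_{i,\pi(i)}:1\le i\le n\}$, where $B_{i,j}$ denotes the 4-cell of $G$ with top $c_i\vee d_j$.
   Context: $G$ is the direct product of chains $0=c_0\prec\dots\prec c_n$ and $0=d_0\prec\dots\prec d_n$, elements written $c_i\vee d_j$. For $i,j\ge1$, $B_{i,j}=\{c_{i-1}\vee d_{j-1},c_{i-1}\vee d_j,c_i\vee d_{j-1},c_i\vee d_j\}$. For a join-congruence $\alpha$ (equivalence compatible with $\vee$), $B_{i,j}$ is a source cell of $\alpha$ if $c_{i-1}\vee d_j$, $c_i\vee d_{j-1}$, $c_i\vee d_j$ lie in one $\alpha$-class not containing $c_{i-1}\vee d_{j-1}$. For $\pi\in S_n$, $\beta_\pi$ is the join, in the lattice of join-congruences of $(G;\vee)$, of the smallest join-congruences collapsing $\{c_{i-1}\vee d_{\pi(i)},c_i\vee d_{\pi(i)-1},c_i\vee d_{\pi(i)}\}$, $i=1,\dots,n$. *)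

theory Defs
  imports "HOL-Combinatorics.Permutations"
begin

text \<open>The grid G = chain {0..n} x chain {0..n}; the pair (i,j) stands for c_i \<or> d_j.\<close>
definition grid :: "nat \<Rightarrow> (nat \<times> nat) set" where
  "grid n = {0..n} \<times> {0..n}"

definition gjoin :: "nat \<times> nat \<Rightarrow> nat \<times> nat \<Rightarrow> nat \<times> nat" where
  "gjoin x y = (max (fst x) (fst y), max (snd x) (snd y))"

definition join_cong :: "nat \<Rightarrow> ((nat \<times> nat) \<times> (nat \<times> nat)) set \<Rightarrow> bool" where
  "join_cong n \<alpha> \<longleftrightarrow> equiv (grid n) \<alpha> \<and>
     (\<forall>x y u v. (x, y) \<in> \<alpha> \<longrightarrow> (u, v) \<in> \<alpha> \<longrightarrow> (gjoin x u, gjoin y v) \<in> \<alpha>)"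

definition cong_gen :: "nat \<Rightarrow> ((nat \<times> nat) \<times> (nat \<times> nat)) set \<Rightarrow> ((nat \<times> nat) \<times> (nat \<times> nat)) set" where
  "cong_gen n R = \<Inter> {\<alpha>. join_cong n \<alpha> \<and> R \<subseteq> \<alpha>}"

definition con_set :: "nat \<Rightarrow> (nat \<times> nat) set \<Rightarrow> ((nat \<times> nat) \<times> (nat \<times> nat)) set" where
  "con_set n S = cong_gen n (S \<times> S)"

definition cong_Join :: "nat \<Rightarrow> ((nat \<times> nat) \<times> (nat \<times> nat)) set set \<Rightarrow> ((nat \<times> nat) \<times> (nat \<times> nat)) set" where
  "cong_Join n A = cong_gen n (\<Union> A)"

definition triple :: "nat \<Rightarrow> nat \<Rightarrow> (nat \<times> nat) set" where
  "triple i j = {(i - 1, j), (i, j - 1), (i, j)}"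

definition beta :: "nat \<Rightarrow> (nat \<Rightarrow> nat) \<Rightarrow> ((nat \<times> nat) \<times> (nat \<times> nat)) set" where
  "beta n \<pi> = cong_Join n {con_set n (triple i (\<pi> i)) | i. i \<in> {1..n}}"

text \<open>B_{i,j} (i,j \<ge> 1) is a source cell of \<alpha>: the three upper elements lie in one class
  not containing the bottom c_{i-1} \<or> d_{j-1}.\<close>
definition source_cell :: "((nat \<times> nat) \<times> (nat \<times> nat)) set \<Rightarrow> nat \<Rightarrow> nat \<Rightarrow> bool" where
  "source_cell \<alpha> i j \<longleftrightarrow>
     ((i - 1, j), (i, j)) \<in> \<alpha> \<and> ((i, j - 1), (i, j)) \<in> \<alpha> \<and> ((i - 1, j - 1), (i, j)) \<notin> \<alpha>"

end

theory Submission
  imports Defs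
begin

definition le2 :: "nat \<times> nat \<Rightarrow> nat \<times> nat \<Rightarrow> bool" where
  "le2 x m \<longleftrightarrow> fst x \<le> fst m \<and> snd x \<le> snd m"

definition sep :: "nat \<Rightarrow> nat \<times> nat \<Rightarrow> ((nat \<times> nat) \<times> (nat \<times> nat)) set" where
  "sep n m = {(x,y). x \<in> grid n \<and> y \<in> grid n \<and> (le2 x m \<longleftrightarrow> le2 y m)}"

lemma sep_cong: "join_cong n (sep n m)"
  unfolding join_cong_def equiv_def refl_on_def sym_def trans_def sep_def
  by (auto simp: grid_def gjoin_def le2_def)

lemma beta_sub:
  assumes "join_cong n \<alpha>" "\<forall>i\<in>{1..n}. triple i (\<pi> i) \<times> triple i (\<pi> i) \<subseteq> \<alpha>"
  shows "beta n \<pi> \<subseteq> \<alpha>"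
proof -
  have "\<forall>i\<in>{1..n}. con_set n (triple i (\<pi> i)) \<subseteq> \<alpha>"
    using assms unfolding con_set_def cong_gen_def by blast
  hence "\<Union>{con_set n (triple i (\<pi> i)) | i. i \<in> {1..n}} \<subseteq> \<alpha>" by blast
  thus ?thesis using assms(1) unfolding beta_def cong_Join_def cong_gen_def by blast
qed

lemma beta_mem:
  assumes "\<And>\<alpha>. join_cong n \<alpha> \<Longrightarrow> \<forall>i\<in>{1..n}. triple i (\<pi> i) \<times> triple i (\<pi> i) \<subseteq> \<alpha> \<Longrightarrow> p \<in> \<alpha>"
  shows "p \<in> beta n \<pi>"
proof -
  have "\<And>S. S \<times> S \<subseteq> con_set n S" unfolding con_set_def cong_gen_def by blast
  { fix \<alpha> assume a: "join_cong n \<alpha>" "\<Union>{con_set n (triple i (\<pi> i)) | i. i \<in> {1..n}} \<subseteq> \<alpha>"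
    have "\<forall>i\<in>{1..n}. triple i (\<pi> i) \<times> triple i (\<pi> i) \<subseteq> \<alpha>"
      using a(2) \<open>\<And>S. S \<times> S \<subseteq> con_set n S\<close> by blast
    hence "p \<in> \<alpha>" using assms a(1) by blast }
  thus ?thesis unfolding beta_def cong_Join_def cong_gen_def by blast
qed

lemma gens:
  assumes p: "\<pi> permutes {1..n}" and k: "k \<in> {1..n}" and l: "l \<in> {1..n}"
  shows "triple l (\<pi> l) \<times> triple l (\<pi> l) \<subseteq> sep n (k - 1, \<pi> k - 1)"
proof -
  have pl: "\<pi> l \<in> {1..n}" and pk: "\<pi> k \<in> {1..n}" using permutes_in_image[OF p] k l by blast+
  have inj: "\<pi> l = \<pi> k \<Longrightarrow> l = k" using permutes_inj[OF p] by (auto dest: injD)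
  show ?thesis
  proof (cases "l = k")
    case True
    thus ?thesis using pl l unfolding triple_def sep_def le2_def grid_def by auto
  next
    case False
    hence "\<pi> l \<noteq> \<pi> k" using inj by blast
    thus ?thesis using pl l pk k False unfolding triple_def sep_def le2_def grid_def by auto
  qed
qed

lemma beta_sep:
  assumes p: "\<pi> permutes {1..n}" and k: "k \<in> {1..n}"
  shows "beta n \<pi> \<subseteq> sep n (k - 1, \<pi> k - 1)"
  using beta_sub[OF sep_cong] gens[OF p k] by blast

theorem lemma4p8:
  fixes n :: nat and \<pi> :: "nat \<Rightarrow> nat"
  assumes "\<pi> permutes {1..n}"
  shows "{(i, j). i \<in> {1..n} \<and> j \<in> {1..n} \<and> source_cell (beta n \<pi>) i j}
           = {(i, \<pi> i) | i. i \<in> {1..n}}"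
proof
  show "{(i, j). i \<in> {1..n} \<and> j \<in> {1..n} \<and> source_cell (beta n \<pi>) i j} \<subseteq> {(i, \<pi> i) | i. i \<in> {1..n}}"
  proof clarify
    fix i j assume i: "i \<in> {1..n}" and j: "j \<in> {1..n}" and s: "source_cell (beta n \<pi>) i j"
    have pi: "\<pi> i \<in> {1..n}" using permutes_in_image[OF assms] i by blast
    have "j = \<pi> i"
    proof (rule ccontr)
      assume ne: "j \<noteq> \<pi> i"
      show False
      proof (cases "j < \<pi> i")
        case True
        have "((i - 1, j), (i, j)) \<in> beta n \<pi>" using s unfolding source_cell_def by blast
        hence "((i - 1, j), (i, j)) \<in> sep n (i - 1, \<pi> i - 1)" using beta_sep[OF assms i] by blast
        thus False using True i unfolding sep_def le2_def by auto
      next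
        case False
        hence gt: "j > \<pi> i" using ne by auto
        obtain k where k: "k \<in> {1..n}" "\<pi> k = j"
          using j assms by (metis permutes_def permutes_in_image)
        have "k \<noteq> i" using k ne by blast
        show False
        proof (cases "k > i")
          case True
          have "((i, j - 1), (i, j)) \<in> beta n \<pi>" using s unfolding source_cell_def by blast
          hence "((i, j - 1), (i, j)) \<in> sep n (k - 1, \<pi> k - 1)" using beta_sep[OF assms k(1)] by blast
          thus False using True k j unfolding sep_def le2_def by auto
        next
          case False
          hence ki: "k < i" using \<open>k \<noteq> i\<close> by auto
          have "((i - 1, j - 1), (i, j)) \<in> beta n \<pi>"
          proof (rule beta_mem)
            fix \<alpha> assume jc: "join_cong n \<alpha>" and g: "\<forall>i\<in>{1..n}. triple i (\<pi> i) \<times> triple i (\<pi> i) \<subseteq> \<alpha>"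
            have eq: "equiv (grid n) \<alpha>" and comp: "\<And>x y u v. (x, y) \<in> \<alpha> \<Longrightarrow> (u, v) \<in> \<alpha> \<Longrightarrow> (gjoin x u, gjoin y v) \<in> \<alpha>"
              using jc unfolding join_cong_def by blast+
            have refl: "\<And>x. x \<in> grid n \<Longrightarrow> (x, x) \<in> \<alpha>" using eq unfolding equiv_def refl_on_def by blast
            have tr: "trans \<alpha>" using eq unfolding equiv_def by blast
            have g1: "((i - 1, \<pi> i), (i, \<pi> i)) \<in> \<alpha>" using g i unfolding triple_def by blast
            have g2: "((k, \<pi> k - 1), (k, \<pi> k)) \<in> \<alpha>" using g k(1) unfolding triple_def by blast
            have "(gjoin (i - 1, \<pi> i) (i - 1, j - 1), gjoin (i, \<pi> i) (i - 1, j - 1)) \<in> \<alpha>"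
              proof (rule comp[OF g1 refl]) show "(i - 1, j - 1) \<in> grid n" using i j by (auto simp: grid_def) qed
            hence a1: "((i - 1, j - 1), (i, j - 1)) \<in> \<alpha>" using gt i unfolding gjoin_def by auto
            have "(gjoin (k, \<pi> k - 1) (i, j - 1), gjoin (k, \<pi> k) (i, j - 1)) \<in> \<alpha>"
              proof (rule comp[OF g2 refl]) show "(i, j - 1) \<in> grid n" using i j by (auto simp: grid_def) qed
            hence a2: "((i, j - 1), (i, j)) \<in> \<alpha>" using ki k j unfolding gjoin_def by auto
            show "((i - 1, j - 1), (i, j)) \<in> \<alpha>" using a1 a2 tr unfolding trans_def by blast
          qed
          thus False using s unfolding source_cell_def by blast
        qed
      qed
    qed
    thus "\<exists>i'. (i, j) = (i', \<pi> i') \<and> i' \<in> {1..n}" using i by blast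
  qed
next
  show "{(i, \<pi> i) | i. i \<in> {1..n}} \<subseteq> {(i, j). i \<in> {1..n} \<and> j \<in> {1..n} \<and> source_cell (beta n \<pi>) i j}"
  proof
    fix x assume "x \<in> {(i, \<pi> i) | i. i \<in> {1..n}}"
    then obtain i where x: "x = (i, \<pi> i)" and i: "i \<in> {1..n}" by blast
    have pi: "\<pi> i \<in> {1..n}" using permutes_in_image[OF assms] i by blast
    have a: "((i - 1, \<pi> i), (i, \<pi> i)) \<in> beta n \<pi>"
      apply (rule beta_mem) using i by (auto simp: triple_def)
    have b: "((i, \<pi> i - 1), (i, \<pi> i)) \<in> beta n \<pi>"
      apply (rule beta_mem) using i by (auto simp: triple_def)
    have c: "((i - 1, \<pi> i - 1), (i, \<pi> i)) \<notin> beta n \<pi>"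
    proof
      assume "((i - 1, \<pi> i - 1), (i, \<pi> i)) \<in> beta n \<pi>"
      hence "((i - 1, \<pi> i - 1), (i, \<pi> i)) \<in> sep n (i - 1, \<pi> i - 1)" using beta_sep[OF assms i] by blast
      thus False using i pi unfolding sep_def le2_def by auto
    qed
    show "x \<in> {(i, j). i \<in> {1..n} \<and> j \<in> {1..n} \<and> source_cell (beta n \<pi>) i j}"
      using x i pi a b c unfolding source_cell_def by blast
  qed
qed

end
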